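(* In the setting below, let $\Delta=\{x\in\mathbb{R}[T_PM,T_PM]: A(v)x(v)=0\text{ for all }v\in T_PM\}$. Then: \begin{enumerate} \item if $x\in\mathbb{R}[T_PM,T_PM]$ and $f\in\mathbb{R}[T_PM,\mathbb{R}]$ is nonzero with $f\cdot x\in\Delta$, then $x\in\Delta$; \item if $T:T_PM\to T_PM$ is the differential at $P$ of a local isometry of $M$ fixing $P$ and $x\in\Delta$, then the polynomial map $Tx$ defined by $(Tx)(v)=T\,x(T^{-1}v)$ also lies in $\Delta$. \end{enumerate}
   Context: $M$ is a locally isotropic pseudo-Riemannian manifold of signature $(p,q)$, $q>p\ge2$ (locally isotropic: for every $P$ and nonzero $x,y\in T_PM$ with $(x,x)=(y,y)$ some local isometry fixing $P$ has differential mapping $x$ to $y$), $P\in M$, $n\ge1$, and $S:T_PM\to\mathrm{Hom}(T_PM,T_PM)$, $S\not\equiv0$, satisfies: each $S(v)$ self-adjoint; $S(v)v=0$; $S(-v)=-S(v)$; $S(Tv)=T\circ S(v)\circ T^{-1}$ for differentials $T$ of local isometries fixing $P$; and $S$ is a homogeneous polynomial of degree $2n+1$ in the coordinates of $v$. The spectrum of $S(v)$ for unit timelike $v$ is $\{0,\pm\lambda_1,\dots,\pm\lambda_l\}$, $\lambda_i>0$, $l\ge1$; $\sigma_k(\lambda)$ is the $k$-th elementary symmetric function of $\lambda_1^2,\dots,\lambda_l^2$; and $A(v)=S(v)^{2l}+\sum_{k=1}^l\sigma_k(\lambda)(v,v)^{(2n+1)k}S(v)^{2l-2k}$. $\mathbb{R}[T_PM,W]$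 denotes polynomial maps $T_PM\to W$. *)

theory Defs
  imports "HOL-Analysis.Analysis"
begin

text \<open>The tangent space T_P M is modelled as real^'d (coordinates v$i).
  The metric at P is given by a symmetric matrix Gm: (u,v) = u \<bullet> (Gm *v v).\<close>

definition gform :: "real^'d^'d \<Rightarrow> real^'d \<Rightarrow> real^'d \<Rightarrow> real" where
  "gform Gm u v = u \<bullet> (Gm *v v)"

definition has_signature :: "real^'d^'d \<Rightarrow> nat \<Rightarrow> nat \<Rightarrow> bool" where
  "has_signature Gm p q \<longleftrightarrow> transpose Gm = Gm \<and>
     (\<exists>B (d::'d \<Rightarrow> real). invertible B \<and> (\<forall>i. d i = -1 \<or> d i = (1::real)) \<and>
        transpose B ** Gm ** B = (\<chi> i j. if i = j then d i else 0) \<and>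
        card {i. d i = -1} = p \<and> card {i. d i = 1} = q)"

inductive poly_fun :: "(real^'d \<Rightarrow> real) \<Rightarrow> bool" where
  const: "poly_fun (\<lambda>v. c)"
| coord: "poly_fun (\<lambda>v. v $ i)"
| add: "poly_fun f \<Longrightarrow> poly_fun g \<Longrightarrow> poly_fun (\<lambda>v. f v + g v)"
| mult: "poly_fun f \<Longrightarrow> poly_fun g \<Longrightarrow> poly_fun (\<lambda>v. f v * g v)"

definition homog_poly_fun :: "(real^'d \<Rightarrow> real) \<Rightarrow> nat \<Rightarrow> bool" where
  "homog_poly_fun f k \<longleftrightarrow> poly_fun f \<and> (\<forall>t v. f (t *\<^sub>R v) = t ^ k * f v)"

definition poly_map :: "(real^'d \<Rightarrow> real^'d) \<Rightarrow> bool" where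
  "poly_map x \<longleftrightarrow> (\<forall>i. poly_fun (\<lambda>v. x v $ i))"

definition mpow :: "real^'d^'d \<Rightarrow> nat \<Rightarrow> real^'d^'d" where
  "mpow M k = (((**) M) ^^ k) (mat 1)"

definition cspectrum :: "real^'d^'d \<Rightarrow> complex set" where
  "cspectrum M = {c. det (\<chi> i j. complex_of_real (M $ i $ j) - (if i = j then c else 0)) = 0}"

definition sigma :: "(nat \<Rightarrow> real) \<Rightarrow> nat \<Rightarrow> nat \<Rightarrow> real" where
  "sigma lam l k = (\<Sum>I\<in>{I. I \<subseteq> {1..l} \<and> card I = k}. \<Prod>i\<in>I. (lam i)\<^sup>2)"

definition Amat :: "real^'d^'d \<Rightarrow> (real^'d \<Rightarrow> real^'d^'d) \<Rightarrow> (nat \<Rightarrow> real) \<Rightarrow> nat \<Rightarrow> nat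
    \<Rightarrow> real^'d \<Rightarrow> real^'d^'d" where
  "Amat Gm S lam l n v = mpow (S v) (2*l) +
     (\<Sum>k\<in>{1..l}. (sigma lam l k * (gform Gm v v) ^ ((2*n+1)*k)) *\<^sub>R mpow (S v) (2*l - 2*k))"

definition Delta :: "real^'d^'d \<Rightarrow> (real^'d \<Rightarrow> real^'d^'d) \<Rightarrow> (nat \<Rightarrow> real) \<Rightarrow> nat \<Rightarrow> nat
    \<Rightarrow> (real^'d \<Rightarrow> real^'d) set" where
  "Delta Gm S lam l n = {x. poly_map x \<and> (\<forall>v. Amat Gm S lam l n v *v x v = 0)}"

end

theory Submission
  imports Defs "HOL-Computational_Algebra.Polynomial"
begin

lemma inv_props:
  fixes T :: "real^'d^'d"
  assumes "invertible T"
  shows "T ** matrix_inv T = mat 1 \<and> matrix_inv T ** T = mat 1"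
  using assms unfolding invertible_def matrix_inv_def by (rule someI_ex)

lemma poly_fun_cont: "poly_fun f \<Longrightarrow> continuous_on UNIV f"
  by (induction rule: poly_fun.induct) (auto intro!: continuous_intros)

lemma poly_fun_line: "poly_fun f \<Longrightarrow> \<exists>p. \<forall>t. f (a + t *\<^sub>R b) = poly p t"
proof (induction rule: poly_fun.induct)
  case (const c) show ?case by (rule exI[of _ "[:c:]"]) simp
next
  case (coord i) show ?case by (rule exI[of _ "[:a$i, b$i:]"]) simp
next
  case (add f g) then obtain p q where "\<forall>t. f (a + t *\<^sub>R b) = poly p t" "\<forall>t. g (a + t *\<^sub>R b) = poly q t" by blast
  then show ?case by (intro exI[of _ "p+q"]) simp
next
  case (mult f g) then obtain p q where "\<forall>t. f (a + t *\<^sub>R b) = poly p t" "\<forall>t. g (a + t *\<^sub>R b) = poly q t" by blast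
  then show ?case by (intro exI[of _ "p*q"]) simp
qed

lemma poly_fun_sum: "finite A \<Longrightarrow> (\<And>k. k \<in> A \<Longrightarrow> poly_fun (g k)) \<Longrightarrow> poly_fun (\<lambda>v. \<Sum>k\<in>A. g k v)"
proof (induction A rule: finite_induct)
  case empty then show ?case using poly_fun.const[of 0] by simp
next
  case (insert a A) then show ?case by (simp add: poly_fun.add)
qed

lemma poly_fun_lin: "poly_fun f \<Longrightarrow> poly_fun (\<lambda>v. f ((M::real^'d^'d) *v v))"
proof (induction rule: poly_fun.induct)
  case (const c) show ?case by (rule poly_fun.const)
next
  case (coord i)
  have "poly_fun (\<lambda>v. \<Sum>j\<in>UNIV. M$i$j * v$j)"
    by (rule poly_fun_sum) (auto intro: poly_fun.mult poly_fun.const poly_fun.coord)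
  then show ?case by (simp add: matrix_vector_mult_def)
next
  case (add f g) then show ?case using poly_fun.add by blast
next
  case (mult f g) then show ?case using poly_fun.mult by blast
qed

lemma cont_mat:
  fixes F :: "real^'d \<Rightarrow> real^'d^'d"
  assumes "\<And>i j. continuous_on UNIV (\<lambda>v. F v $ i $ j)"
  shows "continuous_on UNIV F"
proof -
  have "continuous_on UNIV (\<lambda>v. \<chi> i. \<chi> j. F v $ i $ j)"
    by (intro continuous_on_vec_lambda assms)
  then show ?thesis by simp
qed

lemma cont_mm:
  fixes A B :: "real^'d \<Rightarrow> real^'d^'d"
  assumes "continuous_on UNIV A" "continuous_on UNIV B"
  shows "continuous_on UNIV (\<lambda>v. A v ** B v)"
  unfolding matrix_matrix_mult_def
  by (intro continuous_on_vec_lambda continuous_intros assms)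

lemma cont_mv:
  fixes A :: "real^'d \<Rightarrow> real^'d^'d" and x :: "real^'d \<Rightarrow> real^'d"
  assumes "continuous_on UNIV A" "continuous_on UNIV x"
  shows "continuous_on UNIV (\<lambda>v. A v *v x v)"
  unfolding matrix_vector_mult_def
  by (intro continuous_on_vec_lambda continuous_intros assms)

lemma mpow_Suc: "mpow M (Suc k) = M ** mpow M k"
  by (simp add: mpow_def)

lemma mpow_0: "mpow M 0 = mat 1"
  by (simp add: mpow_def)

lemma cont_mpow:
  fixes A :: "real^'d \<Rightarrow> real^'d^'d"
  assumes "continuous_on UNIV A"
  shows "continuous_on UNIV (\<lambda>v. mpow (A v) k)"
proof (induction k)
  case 0 then show ?case by (simp add: mpow_0)
next
  case (Suc k) then show ?case unfolding mpow_Suc by (intro cont_mm assms)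
qed

lemma sum_mv: "finite A \<Longrightarrow> (\<Sum>k\<in>A. F k) *v (y::real^'d) = (\<Sum>k\<in>A. (F k :: real^'d^'d) *v y)"
  by (induction A rule: finite_induct) (auto simp: matrix_vector_mult_add_rdistrib)

lemma Amat_mv: "Amat Gm S lam l n v *v y = mpow (S v) (2*l) *v y +
     (\<Sum>k\<in>{1..l}. (sigma lam l k * (gform Gm v v) ^ ((2*n+1)*k)) *\<^sub>R (mpow (S v) (2*l - 2*k) *v y))"
  unfolding Amat_def by (simp add: matrix_vector_mult_add_rdistrib sum_mv scaleR_matrix_vector_assoc)

lemma mpow_conj:
  fixes T Ti M :: "real^'d^'d"
  assumes "Ti ** T = mat 1"
  shows "mpow (T ** M ** Ti) k *v (T *v y) = T *v (mpow M k *v y)"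
proof (induction k)
  case 0 then show ?case by (simp add: mpow_0)
next
  case (Suc k)
  have "mpow (T ** M ** Ti) (Suc k) *v (T *v y) = (T ** M ** Ti) *v (T *v (mpow M k *v y))"
    by (simp add: mpow_Suc Suc matrix_vector_mul_assoc[symmetric])
  also have "\<dots> = T *v (M *v ((Ti ** T) *v (mpow M k *v y)))"
    by (simp add: matrix_vector_mul_assoc matrix_mul_assoc)
  also have "\<dots> = T *v (mpow M (Suc k) *v y)"
    by (simp add: assms mpow_Suc matrix_vector_mul_assoc)
  finally show ?case .
qed

lemma mv_sum: "finite A \<Longrightarrow> (T::real^'d^'d) *v (\<Sum>k\<in>A. F k) = (\<Sum>k\<in>A. T *v F k)"
  by (induction A rule: finite_induct) (auto simp: matrix_vector_right_distrib)

theorem lemma5p4: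
  fixes Gm :: "real^'d^'d" and G :: "(real^'d^'d) set"
    and S :: "real^'d \<Rightarrow> real^'d^'d" and p q n l :: nat and lam :: "nat \<Rightarrow> real"
  assumes sig: "has_signature Gm p q" and pq: "2 \<le> p" "p < q" and dim: "CARD('d) = p + q"
    and G_isom: "\<And>T. T \<in> G \<Longrightarrow> invertible T \<and> (\<forall>u w. gform Gm (T *v u) (T *v w) = gform Gm u w)"
    and G_id: "mat 1 \<in> G"
    and G_comp: "\<And>T T'. T \<in> G \<Longrightarrow> T' \<in> G \<Longrightarrow> T ** T' \<in> G"
    and G_inv: "\<And>T. T \<in> G \<Longrightarrow> matrix_inv T \<in> G"
    and loc_iso: "\<And>x y. x \<noteq> 0 \<Longrightarrow> y \<noteq> 0 \<Longrightarrow> gform Gm x x = gform Gm y y \<Longrightarrow>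
                    \<exists>T\<in>G. T *v x = y"
    and n1: "1 \<le> n"
    and S_nz: "\<exists>v. S v \<noteq> 0"
    and S_sa: "\<And>v a b. gform Gm (S v *v a) b = gform Gm a (S v *v b)"
    and S_vv: "\<And>v. S v *v v = 0"
    and S_odd: "\<And>v. S (- v) = - S v"
    and S_equiv: "\<And>T v. T \<in> G \<Longrightarrow> S (T *v v) = T ** S v ** matrix_inv T"
    and S_poly: "\<And>i j. homog_poly_fun (\<lambda>v. S v $ i $ j) (2*n+1)"
    and l1: "1 \<le> l" and lam_pos: "\<And>i. i \<in> {1..l} \<Longrightarrow> lam i > 0"
    and lam_inj: "inj_on lam {1..l}"
    and spec: "\<And>v. gform Gm v v = -1 \<Longrightarrow>
       cspectrum (S v) = insert 0 ((\<lambda>i. complex_of_real (lam i)) ` {1..l}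
                                   \<union> (\<lambda>i. complex_of_real (- lam i)) ` {1..l})"
  shows "(\<forall>x f. poly_map x \<longrightarrow> poly_fun f \<longrightarrow> (\<exists>v. f v \<noteq> 0) \<longrightarrow>
              (\<lambda>v. f v *\<^sub>R x v) \<in> Delta Gm S lam l n \<longrightarrow> x \<in> Delta Gm S lam l n)
       \<and> (\<forall>T x. T \<in> G \<longrightarrow> x \<in> Delta Gm S lam l n \<longrightarrow>
              (\<lambda>v. T *v x (matrix_inv T *v v)) \<in> Delta Gm S lam l n)"
  proof (intro conjI allI impI)
  fix x f
  assume px: "poly_map x" and pf: "poly_fun f" and ex: "\<exists>v. f v \<noteq> 0"
    and D: "(\<lambda>v. f v *\<^sub>R x v) \<in> Delta Gm S lam l n"
  obtain v0 where v0: "f v0 \<noteq> 0" using ex by blast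
  let ?H = "\<lambda>v. Amat Gm S lam l n v *v x v"
  have Z: "?H v = 0" if "f v \<noteq> 0" for v
  proof -
    have "Amat Gm S lam l n v *v (f v *\<^sub>R x v) = 0" using D by (simp add: Delta_def)
    then have "f v *\<^sub>R ?H v = 0" by (simp add: matrix_vector_mult_scaleR)
    then show ?thesis using that by simp
  qed
  have cS: "continuous_on UNIV S"
    by (rule cont_mat) (use S_poly in \<open>auto simp: homog_poly_fun_def intro: poly_fun_cont\<close>)
  have cx: "continuous_on UNIV x"
  proof -
    have "continuous_on UNIV (\<lambda>v. \<chi> i. x v $ i)"
      by (intro continuous_on_vec_lambda) (use px in \<open>auto simp: poly_map_def intro: poly_fun_cont\<close>)
    then show ?thesis by simp
  qed
  have cg: "continuous_on UNIV (\<lambda>v. gform Gm v v)"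
  proof -
    have "continuous_on UNIV (\<lambda>v. Gm *v v)"
      using cont_mv[of "\<lambda>v. Gm" "\<lambda>v. v"] by (simp add: continuous_on_const continuous_on_id)
    then show ?thesis unfolding gform_def by (intro continuous_intros)
  qed
  have cA: "continuous_on UNIV (\<lambda>v. Amat Gm S lam l n v)"
    unfolding Amat_def
    by (intro continuous_intros cont_mpow cS cg)
  have cH: "continuous_on UNIV ?H" by (intro cont_mv cA cx)
  show "x \<in> Delta Gm S lam l n"
    unfolding Delta_def
  proof (intro CollectI conjI allI px)
    fix w
    obtain p where p: "\<And>t. f (w + t *\<^sub>R (v0 - w)) = poly p t"
      using poly_fun_line[OF pf] by blast
    have "poly p 1 \<noteq> 0" using p[of 1] v0 by simp
    then have "p \<noteq> 0" by auto
    then have fin: "finite {t. poly p t = 0}" by (rule poly_roots_finite)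
    have ev0: "eventually (\<lambda>t. t \<notin> {t. poly p t = 0}) (at (0::real))"
      using islimpt_finite[OF fin] islimpt_iff_eventually by blast
    define g where "g t = ?H (w + t *\<^sub>R (v0 - w))" for t
    have "eventually (\<lambda>t. g t = 0) (at (0::real))"
      using ev0 by eventually_elim (auto simp: g_def intro!: Z simp: p)
    then have l1: "(g \<longlongrightarrow> 0) (at 0)" by (rule tendsto_eventually)
    have "continuous_on UNIV g" unfolding g_def
      by (rule continuous_on_compose2[OF cH]) (auto intro!: continuous_intros)
    then have l2: "(g \<longlongrightarrow> g 0) (at 0)"
      by (simp add: continuous_on_eq_continuous_at isCont_def)
    have "g 0 = 0" using tendsto_unique[OF trivial_limit_at l2 l1] by simp
    then show "?H w = 0" by (simp add: g_def)
  qed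
next
  fix T x
  assume TG: "T \<in> G" and xD: "x \<in> Delta Gm S lam l n"
  define Ti where "Ti = matrix_inv T"
  have inv: "T ** Ti = mat 1" "Ti ** T = mat 1"
    using inv_props[of T] G_isom[OF TG] by (auto simp: Ti_def)
  have px: "poly_map x" and xz: "\<And>v. Amat Gm S lam l n v *v x v = 0"
    using xD by (auto simp: Delta_def)
  have pm: "poly_map (\<lambda>v. T *v x (Ti *v v))"
    unfolding poly_map_def
  proof
    fix i
    have "poly_fun (\<lambda>v. \<Sum>j\<in>UNIV. T$i$j * x (Ti *v v) $ j)"
    proof (rule poly_fun_sum)
      fix j
      have "poly_fun (\<lambda>v. x (Ti *v v) $ j)"
        using poly_fun_lin[of "\<lambda>u. x u $ j" Ti] px by (simp add: poly_map_def)
      then show "poly_fun (\<lambda>v. T$i$j * x (Ti *v v) $ j)"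
        using poly_fun.mult[OF poly_fun.const] by blast
    qed simp
    then show "poly_fun (\<lambda>v. (T *v x (Ti *v v)) $ i)"
      by (simp add: matrix_vector_mult_def)
  qed
  have "Amat Gm S lam l n v *v (T *v x (Ti *v v)) = 0" for v
  proof -
    define u where "u = Ti *v v"
    have vu: "v = T *v u" by (simp add: u_def matrix_vector_mul_assoc inv)
    have Sv: "S v = T ** S u ** Ti" using S_equiv[OF TG, of u] vu by (simp add: Ti_def)
    have gv: "gform Gm v v = gform Gm u u" using G_isom[OF TG] vu by simp
    have mp: "\<And>k y. mpow (S v) k *v (T *v y) = T *v (mpow (S u) k *v y)"
      unfolding Sv by (rule mpow_conj[OF inv(2)])
    have "Amat Gm S lam l n v *v (T *v x u) = T *v (Amat Gm S lam l n u *v x u)"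
      unfolding Amat_mv gv mp
      by (simp add: mv_sum matrix_vector_right_distrib matrix_vector_mult_scaleR)
    then show ?thesis using xz[of u] by (simp add: u_def)
  qed
  then show "(\<lambda>v. T *v x (matrix_inv T *v v)) \<in> Delta Gm S lam l n"
    using pm by (simp add: Delta_def Ti_def)
qed

end
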